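(* Let $n$ be a positive integer, let $d$ be an odd positive integer, $e = (d+1)/2$, $s \in \{1,2,3\}$, and let $S = \{m_1,\dots,m_e\}$ be a set of $e$ integers which is a Sidon-type set of strength $s$ in $\mathbb{Z}_n$. Then the $n$ column vectors of the $(d+1)\times n$ matrix $M(S) = \sqrt{2/(d+1)}\cdot A(S)$ form a spherical $s$-design on $S^d$.
   Context: For an integer $m$, $s(m) = \big(\sin(\tfrac{2\pi}{n}km)\big)_{k=1}^n$ and $c(m) = \big(\cos(\tfrac{2\pi}{n}km)\big)_{k=1}^n$ in $\mathbb{R}^n$; $A(S)$ is the $2e\times n$ matrix with rows $s(m_1),c(m_1),\dots,s(m_e),c(m_e)$. A set $S$ of integers is a Sidon-type set of strength $t$ in $\mathbb{Z}_n$ if no non-trivial sum $\varepsilon_1x_1+\cdots+\varepsilon_tx_t$ with $\varepsilon_i\in\{0,\pm1\}$ and $x_i\in S$ (not necessarily distinct) is $\equiv 0 \bmod n$; a sum is non-trivial if some $\varepsilon_i\neq 0$ and no element appears with both coefficients $+1$ and $-1$. $S^d$ is the unit sphere in $\mathbb{R}^{d+1}$; a collection of $n$ points of $S^d$ (columns of a matrix, counted with multiplicity) is a spherical $t$-design if for every polynomial of degree at most $t$ its average over $S^d$ (surface measure) equals its arithmetic average over the $n$ points. *)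

theory Defs
  imports "HOL-Analysis.Analysis"
begin

text \<open>Points of R^(d+1) are represented as functions nat => real, coordinates 0..d.\<close>

definition sph_norm :: "nat \<Rightarrow> (nat \<Rightarrow> real) \<Rightarrow> real" where
  "sph_norm d x = sqrt (\<Sum>i\<le>d. (x i)^2)"

definition unit_sphere :: "nat \<Rightarrow> (nat \<Rightarrow> real) set" where
  "unit_sphere d = {x. (\<forall>i>d. x i = 0) \<and> sph_norm d x = 1}"

definition leb :: "nat \<Rightarrow> (nat \<Rightarrow> real) measure" where
  "leb d = PiM {..d} (\<lambda>_. lborel)"

definition unit_ball :: "nat \<Rightarrow> (nat \<Rightarrow> real) set" where
  "unit_ball d = {x \<in> space (leb d). sph_norm d x \<le> 1}"

text \<open>Average of f over S^d w.r.t. the (normalized) surface measure, realized as the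
  push-forward of normalized Lebesgue measure on the unit ball under radial projection.\<close>
definition sphere_avg :: "nat \<Rightarrow> ((nat \<Rightarrow> real) \<Rightarrow> real) \<Rightarrow> real" where
  "sphere_avg d f =
     set_lebesgue_integral (leb d) (unit_ball d) (\<lambda>x. f (\<lambda>i. x i / sph_norm d x))
       / measure (leb d) (unit_ball d)"

definition poly_deg_le :: "nat \<Rightarrow> nat \<Rightarrow> ((nat \<Rightarrow> real) \<Rightarrow> real) \<Rightarrow> bool" where
  "poly_deg_le d t f \<longleftrightarrow>
     (\<exists>c :: (nat \<Rightarrow> nat) \<Rightarrow> real. \<forall>x. f x =
        (\<Sum>\<alpha>\<in>{\<alpha>\<in>{..d} \<rightarrow>\<^sub>E {..t}. (\<Sum>i\<le>d. \<alpha> i) \<le> t}. c \<alpha> * (\<Prod>i\<le>d. x i ^ \<alpha> i)))"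

definition spherical_design :: "nat \<Rightarrow> nat \<Rightarrow> nat \<Rightarrow> (nat \<Rightarrow> nat \<Rightarrow> real) \<Rightarrow> bool" where
  "spherical_design d t N p \<longleftrightarrow>
     (\<forall>k\<in>{1..N}. p k \<in> unit_sphere d) \<and>
     (\<forall>f. poly_deg_le d t f \<longrightarrow> sphere_avg d f = (\<Sum>k=1..N. f (p k)) / real N)"

definition sidon_type :: "int set \<Rightarrow> nat \<Rightarrow> nat \<Rightarrow> bool" where
  "sidon_type S t n \<longleftrightarrow>
     (\<forall>(\<epsilon>::nat \<Rightarrow> int) (x::nat \<Rightarrow> int).
        (\<forall>i\<in>{1..t}. \<epsilon> i \<in> {-1, 0, 1} \<and> x i \<in> S) \<and>
        (\<exists>i\<in>{1..t}. \<epsilon> i \<noteq> 0) \<and>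
        \<not> (\<exists>i\<in>{1..t}. \<exists>j\<in>{1..t}. \<epsilon> i = 1 \<and> \<epsilon> j = -1 \<and> x i = x j)
        \<longrightarrow> (\<Sum>i=1..t. \<epsilon> i * x i) mod int n \<noteq> 0)"

text \<open>Entry (i,k) of A(S), rows 0-based (row 2j = s(m_(j+1)), row 2j+1 = c(m_(j+1))),
  columns k = 1..n.\<close>
definition A_entry :: "nat \<Rightarrow> (nat \<Rightarrow> int) \<Rightarrow> nat \<Rightarrow> nat \<Rightarrow> real" where
  "A_entry n m i k =
     (if even i then sin (2 * pi / real n * real k * real_of_int (m (i div 2 + 1)))
      else cos (2 * pi / real n * real k * real_of_int (m (i div 2 + 1))))"

definition M_col :: "nat \<Rightarrow> nat \<Rightarrow> (nat \<Rightarrow> int) \<Rightarrow> nat \<Rightarrow> nat \<Rightarrow> real" where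
  "M_col d n m k = (\<lambda>i. if i \<le> d then sqrt (2 / real (d + 1)) * A_entry n m i k else 0)"

end

theory Submission
  imports Defs
begin

definition ang :: "nat \<Rightarrow> nat \<Rightarrow> int \<Rightarrow> real" where
  "ang n k N = 2 * pi / real n * real k * real_of_int N"

lemma ang_add: "ang n k a + ang n k b = ang n k (a + b)"
  by (simp only: ang_def of_int_add distrib_left)
lemma ang_diff: "ang n k a - ang n k b = ang n k (a - b)"
  by (simp only: ang_def of_int_diff right_diff_distrib)

lemma cis_sum_zero:
  assumes n: "n > 0" and N: "\<not> int n dvd N"
  shows "(\<Sum>k=1..n. cis (ang n k N)) = 0"
proof -
  define w where "w = cis (2 * pi * real_of_int N / real n)"
  have pw: "w ^ k = cis (ang n k N)" for k
    proof -
    have "w ^ k = cis (real k * (2 * pi * real_of_int N / real n))" by (simp only: w_def Complex.DeMoivre)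
    also have "\<dots> = cis (ang n k N)" by (simp add: ang_def algebra_simps)
    finally show ?thesis .
  qed
  have wn: "w ^ n = 1"
    unfolding pw ang_def using n by (simp add: cis_conv_exp exp_eq_1)
  have w1: "w \<noteq> 1"
  proof
    assume "w = 1"
    then obtain j :: int where j: "2 * pi * real_of_int N / real n = 2 * pi * real_of_int j"
      unfolding w_def cis_conv_exp exp_eq_1 by auto
    then have "real_of_int N = real n * real_of_int j" using n by (simp add: field_simps)
    then have "N = int n * j" by (metis of_int_eq_iff of_int_mult of_int_of_nat_eq)
    then show False using N by simp
  qed
  have "(\<Sum>k=1..n. cis (ang n k N)) = (\<Sum>k<n. w ^ Suc k)"
    unfolding pw[symmetric] using sum.atLeast1_atMost_eq[of "\<lambda>k. w ^ k" n] by simp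
  also have "\<dots> = w * (\<Sum>k<n. w ^ k)" by (simp only: sum_distrib_left power_Suc)
  also have "\<dots> = 0" using geometric_sum[OF w1, of n] wn by simp
  finally show ?thesis .
qed

lemma trig_sum_zero:
  fixes g :: "real \<Rightarrow> real"
  assumes n: "n > 0" and N: "\<not> int n dvd N" and g: "g = sin \<or> g = cos"
  shows "(\<Sum>k=1..n. g (ang n k N)) = 0"
proof -
  have "Re (\<Sum>k=1..n. cis (ang n k N)) = 0" "Im (\<Sum>k=1..n. cis (ang n k N)) = 0"
    using cis_sum_zero[OF n N] by auto
  then show ?thesis using g by (auto simp: Re_sum Im_sum)
qed

lemma prod_to_sum:
  fixes g1 g2 :: "real \<Rightarrow> real"
  assumes "g1 = sin \<or> g1 = cos" "g2 = sin \<or> g2 = cos"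
  shows "\<exists>h1 h2 c1 c2. (h1 = sin \<or> h1 = cos) \<and> (h2 = sin \<or> h2 = cos) \<and>
     (\<forall>x y. g1 x * g2 y = c1 * h1 (x + y) + c2 * h2 (x - y))"
proof -
  have 1: "\<forall>x y::real. sin x * sin y = (-1/2) * cos (x+y) + (1/2) * cos (x-y)" by (simp add: sin_times_sin)
  have 2: "\<forall>x y::real. sin x * cos y = (1/2) * sin (x+y) + (1/2) * sin (x-y)" by (simp add: sin_times_cos)
  have 3: "\<forall>x y::real. cos x * sin y = (1/2) * sin (x+y) + (-1/2) * sin (x-y)" by (simp add: cos_times_sin)
  have 4: "\<forall>x y::real. cos x * cos y = (1/2) * cos (x+y) + (1/2) * cos (x-y)" by (simp add: cos_times_cos)
  show ?thesis using assms
  proof (elim disjE)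
    assume A: "g1 = sin" "g2 = sin" show ?thesis unfolding A using 1 by blast
  next
    assume A: "g1 = sin" "g2 = cos" show ?thesis unfolding A using 2 by blast
  next
    assume A: "g1 = cos" "g2 = sin" show ?thesis unfolding A using 3 by blast
  next
    assume A: "g1 = cos" "g2 = cos" show ?thesis unfolding A using 4 by blast
  qed
qed

lemma sum2_zero:
  fixes g1 g2 :: "real \<Rightarrow> real"
  assumes n: "n > 0" and g: "g1 = sin \<or> g1 = cos" "g2 = sin \<or> g2 = cos"
    and N: "\<not> int n dvd (a + b)" "\<not> int n dvd (a - b)"
  shows "(\<Sum>k=1..n. g1 (ang n k a) * g2 (ang n k b)) = 0"
proof -
  obtain h1 h2 c1 c2 where h: "h1 = sin \<or> h1 = cos" "h2 = sin \<or> h2 = cos"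
    and eq: "\<And>x y. g1 x * g2 y = c1 * h1 (x + y) + c2 * h2 (x - y)"
    using prod_to_sum[OF g] by blast
  have "(\<Sum>k=1..n. g1 (ang n k a) * g2 (ang n k b))
      = c1 * (\<Sum>k=1..n. h1 (ang n k (a+b))) + c2 * (\<Sum>k=1..n. h2 (ang n k (a-b)))"
    by (simp add: eq ang_add ang_diff sum.distrib sum_distrib_left)
  also have "\<dots> = 0" using trig_sum_zero[OF n N(1) h(1)] trig_sum_zero[OF n N(2) h(2)] by simp
  finally show ?thesis .
qed

lemma sum3_zero:
  fixes g1 g2 g3 :: "real \<Rightarrow> real"
  assumes n: "n > 0" and g: "g1 = sin \<or> g1 = cos" "g2 = sin \<or> g2 = cos" "g3 = sin \<or> g3 = cos"
    and N: "\<not> int n dvd (a + b + c)" "\<not> int n dvd (a + b - c)"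
           "\<not> int n dvd (a - b + c)" "\<not> int n dvd (a - b - c)"
  shows "(\<Sum>k=1..n. g1 (ang n k a) * g2 (ang n k b) * g3 (ang n k c)) = 0"
proof -
  obtain h1 h2 c1 c2 where h: "h1 = sin \<or> h1 = cos" "h2 = sin \<or> h2 = cos"
    and eq: "\<And>x y. g1 x * g2 y = c1 * h1 (x + y) + c2 * h2 (x - y)"
    using prod_to_sum[OF g(1,2)] by blast
  have "(\<Sum>k=1..n. g1 (ang n k a) * g2 (ang n k b) * g3 (ang n k c))
      = c1 * (\<Sum>k=1..n. h1 (ang n k (a+b)) * g3 (ang n k c))
        + c2 * (\<Sum>k=1..n. h2 (ang n k (a-b)) * g3 (ang n k c))"
    by (simp add: eq ang_add ang_diff sum.distrib sum_distrib_left algebra_simps)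
  also have "\<dots> = 0"
    using sum2_zero[OF n h(1) g(3), of "a+b" c] sum2_zero[OF n h(2) g(3), of "a-b" c] N
    by (simp add: algebra_simps)
  finally show ?thesis .
qed

lemma sid3:
  assumes "sidon_type S 3 n" "e1 \<in> {-1,0,1}" "e2 \<in> {-1,0,1}" "e3 \<in> {-1,0,1}"
    "x1 \<in> S" "x2 \<in> S" "x3 \<in> S" "e1 \<noteq> 0 \<or> e2 \<noteq> 0 \<or> e3 \<noteq> 0"
    "\<not> (e1 = 1 \<and> e2 = -1 \<and> x1 = x2)" "\<not> (e1 = 1 \<and> e3 = -1 \<and> x1 = x3)"
    "\<not> (e2 = 1 \<and> e1 = -1 \<and> x1 = x2)" "\<not> (e2 = 1 \<and> e3 = -1 \<and> x2 = x3)"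
    "\<not> (e3 = 1 \<and> e1 = -1 \<and> x1 = x3)" "\<not> (e3 = 1 \<and> e2 = -1 \<and> x2 = x3)"
  shows "\<not> int n dvd (e1 * x1 + e2 * x2 + e3 * x3)"
proof -
  define E where "E = (\<lambda>i::nat. if i = 1 then e1 else if i = 2 then e2 else e3)"
  define X where "X = (\<lambda>i::nat. if i = 1 then x1 else if i = 2 then x2 else x3)"
  have I: "{1..3::nat} = {1,2,3}" by auto
  have "(\<forall>i\<in>{1..3}. E i \<in> {-1, 0, 1} \<and> X i \<in> S) \<and>
        (\<exists>i\<in>{1..3}. E i \<noteq> 0) \<and>
        \<not> (\<exists>i\<in>{1..3}. \<exists>j\<in>{1..3}. E i = 1 \<and> E j = -1 \<and> X i = X j)
        \<longrightarrow> (\<Sum>i=1..3. E i * X i) mod int n \<noteq> 0"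
    using spec[OF spec[OF assms(1)[unfolded sidon_type_def]], of E X] by simp
  moreover have "(\<Sum>i=1..3. E i * X i) = e1 * x1 + e2 * x2 + e3 * x3"
    unfolding I by (simp add: E_def X_def)
  moreover have "\<forall>i\<in>{1..3}. E i \<in> {-1, 0, 1} \<and> X i \<in> S"
    unfolding I using assms(2-7) by (simp add: E_def X_def)
  moreover have "\<exists>i\<in>{1..3}. E i \<noteq> 0"
    unfolding I using assms(8) by (simp add: E_def X_def)
  moreover have "\<not> (\<exists>i\<in>{1..3}. \<exists>j\<in>{1..3}. E i = 1 \<and> E j = -1 \<and> X i = X j)"
    unfolding I using assms(9-14) by (auto simp add: E_def X_def)
  ultimately show ?thesis by (simp add: dvd_eq_mod_eq_0)
qed

lemma sid2:
  assumes "sidon_type S 2 n" "e1 \<in> {-1,0,1}" "e2 \<in> {-1,0,1}"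
    "x1 \<in> S" "x2 \<in> S" "e1 \<noteq> 0 \<or> e2 \<noteq> 0"
    "\<not> (e1 = 1 \<and> e2 = -1 \<and> x1 = x2)"
    "\<not> (e2 = 1 \<and> e1 = -1 \<and> x1 = x2)"
  shows "\<not> int n dvd (e1 * x1 + e2 * x2)"
proof -
  define E where "E = (\<lambda>i::nat. if i = 1 then e1 else e2)"
  define X where "X = (\<lambda>i::nat. if i = 1 then x1 else x2)"
  have I: "{1..2::nat} = {1,2}" by auto
  have "(\<forall>i\<in>{1..2}. E i \<in> {-1, 0, 1} \<and> X i \<in> S) \<and>
        (\<exists>i\<in>{1..2}. E i \<noteq> 0) \<and>
        \<not> (\<exists>i\<in>{1..2}. \<exists>j\<in>{1..2}. E i = 1 \<and> E j = -1 \<and> X i = X j)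
        \<longrightarrow> (\<Sum>i=1..2. E i * X i) mod int n \<noteq> 0"
    using spec[OF spec[OF assms(1)[unfolded sidon_type_def]], of E X] by simp
  moreover have "(\<Sum>i=1..2. E i * X i) = e1 * x1 + e2 * x2"
    unfolding I by (simp add: E_def X_def)
  moreover have "\<forall>i\<in>{1..2}. E i \<in> {-1, 0, 1} \<and> X i \<in> S"
    unfolding I using assms(2-5) by (simp add: E_def X_def)
  moreover have "\<exists>i\<in>{1..2}. E i \<noteq> 0"
    unfolding I using assms(6) by (simp add: E_def X_def)
  moreover have "\<not> (\<exists>i\<in>{1..2}. \<exists>j\<in>{1..2}. E i = 1 \<and> E j = -1 \<and> X i = X j)"
    unfolding I using assms(7-8) by (auto simp add: E_def X_def)
  ultimately show ?thesis by (simp add: dvd_eq_mod_eq_0)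
qed

lemma sid1:
  assumes "sidon_type S 1 n" "x1 \<in> S"
  shows "\<not> int n dvd x1"
  using spec[OF spec[OF assms(1)[unfolded sidon_type_def]], of "\<lambda>_. 1" "\<lambda>_. x1"] assms(2)
  by (simp add: dvd_eq_mod_eq_0)

definition F1 :: "(nat \<Rightarrow> int) \<Rightarrow> nat \<Rightarrow> nat \<Rightarrow> bool" where
  "F1 m e n \<longleftrightarrow> (\<forall>j\<in>{1..e}. \<not> int n dvd m j)"
definition F2 :: "(nat \<Rightarrow> int) \<Rightarrow> nat \<Rightarrow> nat \<Rightarrow> bool" where
  "F2 m e n \<longleftrightarrow> (\<forall>j\<in>{1..e}. \<forall>j'\<in>{1..e}. \<not> int n dvd (m j + m j') \<and>
      (j \<noteq> j' \<longrightarrow> \<not> int n dvd (m j - m j')))"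
definition F3 :: "(nat \<Rightarrow> int) \<Rightarrow> nat \<Rightarrow> nat \<Rightarrow> bool" where
  "F3 m e n \<longleftrightarrow> (\<forall>a\<in>{1..e}. \<forall>b\<in>{1..e}. \<forall>c\<in>{1..e}.
      \<not> int n dvd (m a + m b + m c) \<and> \<not> int n dvd (m a + m b - m c) \<and>
      \<not> int n dvd (m a - m b + m c) \<and> \<not> int n dvd (m a - m b - m c))"

lemma facts1:
  assumes S: "sidon_type (m ` {1..e}) 1 n"
  shows "F1 m e n"
  using sid1[OF S] unfolding F1_def by blast

lemma facts3:
  assumes S: "sidon_type (m ` {1..e}) 3 n" and inj: "inj_on m {1..e}"
  shows "F1 m e n" "F2 m e n" "F3 m e n"
proof -
  have eq: "m x = m y \<longleftrightarrow> x = y" if "x \<in> {1..e}" "y \<in> {1..e}" for x y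
    using inj_onD[OF inj] that by auto
  have one: "\<not> int n dvd m a" if "a \<in> {1..e}" for a
  proof -
    have "\<not> int n dvd (1 * m a + 0 * m a + 0 * m a)"
      by (rule sid3[OF S]) (use that in auto)
    then show ?thesis by simp
  qed
  show "F1 m e n" using one unfolding F1_def by blast
  have "\<not> int n dvd (m a + m b)" if "a \<in> {1..e}" "b \<in> {1..e}" for a b
  proof -
    have "\<not> int n dvd (1 * m a + 1 * m b + 0 * m a)"
      by (rule sid3[OF S]) (use that in auto)
    then show ?thesis by simp
  qed
  moreover have "\<not> int n dvd (m a - m b)" if "a \<in> {1..e}" "b \<in> {1..e}" "a \<noteq> b" for a b
  proof -
    have "\<not> int n dvd (1 * m a + (-1) * m b + 0 * m a)"
      by (rule sid3[OF S]) (use that eq in auto)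
    then show ?thesis by simp
  qed
  ultimately show "F2 m e n" unfolding F2_def by blast
  have "\<not> int n dvd (m a + m b + m c) \<and> \<not> int n dvd (m a + m b - m c) \<and>
      \<not> int n dvd (m a - m b + m c) \<and> \<not> int n dvd (m a - m b - m c)"
    if abc: "a \<in> {1..e}" "b \<in> {1..e}" "c \<in> {1..e}" for a b c
  proof (intro conjI)
    have "\<not> int n dvd (1 * m a + 1 * m b + 1 * m c)"
      by (rule sid3[OF S]) (use abc in auto)
    then show "\<not> int n dvd (m a + m b + m c)" by simp
    show "\<not> int n dvd (m a + m b - m c)"
    proof (cases "a = c \<or> b = c")
      case True then show ?thesis using one abc by auto
    next
      case False
      have "\<not> int n dvd (1 * m a + 1 * m b + (-1) * m c)"
        by (rule sid3[OF S]) (use abc eq False in auto)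
      then show ?thesis by simp
    qed
    show "\<not> int n dvd (m a - m b + m c)"
    proof (cases "a = b \<or> b = c")
      case True then show ?thesis using one abc by auto
    next
      case False
      have "\<not> int n dvd (1 * m a + (-1) * m b + 1 * m c)"
        by (rule sid3[OF S]) (use abc eq False in auto)
      then show ?thesis by simp
    qed
    show "\<not> int n dvd (m a - m b - m c)"
    proof (cases "a = b \<or> a = c")
      case True then show ?thesis using one[of b] one[of c] abc by (auto simp: dvd_minus_iff)
    next
      case False
      have "\<not> int n dvd (1 * m a + (-1) * m b + (-1) * m c)"
        by (rule sid3[OF S]) (use abc eq False in auto)
      then show ?thesis by (simp add: algebra_simps)
    qed
  qed
  then show "F3 m e n" unfolding F3_def by blast
qed

lemma facts2:
  assumes S: "sidon_type (m ` {1..e}) 2 n" and inj: "inj_on m {1..e}"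
  shows "F1 m e n" "F2 m e n"
proof -
  have eq: "m x = m y \<longleftrightarrow> x = y" if "x \<in> {1..e}" "y \<in> {1..e}" for x y
    using inj_onD[OF inj] that by auto
  have one: "\<not> int n dvd m a" if "a \<in> {1..e}" for a
  proof -
    have "\<not> int n dvd (1 * m a + 0 * m a)"
      by (rule sid2[OF S]) (use that in auto)
    then show ?thesis by simp
  qed
  show "F1 m e n" using one unfolding F1_def by blast
  have "\<not> int n dvd (m a + m b)" if "a \<in> {1..e}" "b \<in> {1..e}" for a b
  proof -
    have "\<not> int n dvd (1 * m a + 1 * m b)"
      by (rule sid2[OF S]) (use that in auto)
    then show ?thesis by simp
  qed
  moreover have "\<not> int n dvd (m a - m b)" if "a \<in> {1..e}" "b \<in> {1..e}" "a \<noteq> b" for a b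
  proof -
    have "\<not> int n dvd (1 * m a + (-1) * m b)"
      by (rule sid2[OF S]) (use that eq in auto)
    then show ?thesis by simp
  qed
  ultimately show "F2 m e n" unfolding F2_def by blast
qed

definition V :: "nat \<Rightarrow> nat list \<Rightarrow> real" where
  "V d js = (if js = [] then 1 else if length js = 2 \<and> js!0 = js!1 then 1 / (real d + 1) else 0)"

definition tf :: "nat \<Rightarrow> real \<Rightarrow> real" where
  "tf i = (if even i then sin else cos)"

lemma tf_cases: "tf i = sin \<or> tf i = cos" by (simp add: tf_def)

lemma A_eq: "A_entry n m i k = tf i (ang n k (m (i div 2 + 1)))"
  by (simp add: A_entry_def tf_def ang_def)

lemma prod_col:
  assumes "set js \<subseteq> {..d}"
  shows "prod_list (map (M_col d n m k) js) =
     sqrt (2 / real (d + 1)) ^ length js * prod_list (map (\<lambda>i. tf i (ang n k (m (i div 2 + 1)))) js)"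
  using assms by (induction js) (auto simp: M_col_def A_eq)

lemma ang_double: "ang n k (2 * N) = 2 * ang n k N"
  by (simp add: ang_def)

lemma sq_sum:
  assumes n: "n > 0" and N: "\<not> int n dvd (N + N)" and g: "g = sin \<or> g = cos"
  shows "(\<Sum>k=1..n. g (ang n k N) * g (ang n k N)) = real n / 2"
proof -
  have c: "(\<Sum>k=1..n. cos (ang n k (N + N))) = 0" using trig_sum_zero[OF n N] by simp
  show ?thesis using g
  proof
    assume g: "g = sin"
    have "(\<Sum>k=1..n. g (ang n k N) * g (ang n k N)) = (\<Sum>k=1..n. (1 - cos (ang n k (N+N))) / 2)"
      unfolding g by (intro sum.cong refl) (simp add: sin_times_sin ang_add[symmetric] ang_double)
    also have "\<dots> = real n / 2" using c by (simp add: sum_divide_distrib[symmetric] sum_subtractf)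
    finally show ?thesis .
  next
    assume g: "g = cos"
    have "(\<Sum>k=1..n. g (ang n k N) * g (ang n k N)) = (\<Sum>k=1..n. (1 + cos (ang n k (N+N))) / 2)"
      unfolding g by (intro sum.cong refl) (simp add: cos_times_cos ang_add[symmetric] add.commute ang_double)
    also have "\<dots> = real n / 2" using c by (simp add: sum_divide_distrib[symmetric] sum.distrib)
    finally show ?thesis .
  qed
qed

lemma sc_sum:
  assumes n: "n > 0" and N: "\<not> int n dvd (N + N)" and g: "g1 = sin \<and> g2 = cos \<or> g1 = cos \<and> g2 = sin"
  shows "(\<Sum>k=1..n. g1 (ang n k N) * g2 (ang n k N)) = 0"
proof -
  have c: "(\<Sum>k=1..n. sin (ang n k (N + N))) = 0" using trig_sum_zero[OF n N] by simp
  have "(\<Sum>k=1..n. g1 (ang n k N) * g2 (ang n k N)) = (\<Sum>k=1..n. sin (ang n k (N+N)) / 2)"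
    using g by (intro sum.cong refl) (auto simp: sin_times_cos cos_times_sin ang_add[symmetric] ang_double)
  also have "\<dots> = 0" using c by (simp add: sum_divide_distrib[symmetric])
  finally show ?thesis .
qed

lemma points:
  assumes n: "n > 0" and de: "d + 1 = 2 * e" and js: "set js \<subseteq> {..d}" "length js \<le> 3"
    and f1: "F1 m e n" and f2: "length js \<ge> 2 \<Longrightarrow> F2 m e n" and f3: "length js \<ge> 3 \<Longrightarrow> F3 m e n"
  shows "(\<Sum>k=1..n. prod_list (map (M_col d n m k) js)) / real n = V d js"
proof -
  define \<gamma> where "\<gamma> = sqrt (2 / real (d + 1))"
  have idx: "i div 2 + 1 \<in> {1..e}" if "i \<le> d" for i using that de by auto
  let ?x = "\<lambda>i k. ang n k (m (i div 2 + 1))"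
  have eq: "(\<Sum>k=1..n. prod_list (map (M_col d n m k) js)) =
     \<gamma> ^ length js * (\<Sum>k=1..n. prod_list (map (\<lambda>i. tf i (?x i k)) js))"
    unfolding \<gamma>_def by (simp add: prod_col[OF js(1)] sum_distrib_left)
  consider "js = []" | a where "js = [a]" | a b where "js = [a, b]" | a b c where "js = [a, b, c]"
  proof -
    have "length js = 0 \<or> length js = Suc 0 \<or> length js = Suc (Suc 0) \<or> length js = Suc (Suc (Suc 0))"
      using js(2) by (auto simp: numeral_eq_Suc le_Suc_eq)
    then show "(js = [] \<Longrightarrow> thesis) \<Longrightarrow> (\<And>a. js = [a] \<Longrightarrow> thesis) \<Longrightarrow> (\<And>a b. js = [a, b] \<Longrightarrow> thesis)
       \<Longrightarrow> (\<And>a b c. js = [a, b, c] \<Longrightarrow> thesis) \<Longrightarrow> thesis"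
      by (auto simp: length_Suc_conv)
  qed
  then show ?thesis
  proof cases
    case 1 then show ?thesis using n by (simp add: V_def)
  next
    case (2 a)
    have "(\<Sum>k=1..n. tf a (?x a k)) = 0"
      using trig_sum_zero[OF n _ tf_cases] f1 idx[of a] js(1) unfolding F1_def 2 by auto
    then show ?thesis unfolding eq by (simp add: 2 V_def)
  next
    case (3 a b)
    have F2: "F2 m e n" using f2 3 by simp
    have ab: "a \<le> d" "b \<le> d" using js(1) 3 by auto
    show ?thesis
    proof (cases "a div 2 = b div 2")
      case False
      then have "(\<Sum>k=1..n. tf a (?x a k) * tf b (?x b k)) = 0"
        using sum2_zero[OF n tf_cases tf_cases] F2 idx[OF ab(1)] idx[OF ab(2)] unfolding F2_def
        by auto
      then show ?thesis unfolding eq using False by (auto simp: 3 V_def)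
    next
      case True
      note nz = F2[unfolded F2_def, rule_format, OF idx[OF ab(1)] idx[OF ab(1)], THEN conjunct1]
      show ?thesis
      proof (cases "a = b")
        case True
        have hS: "(\<Sum>k=1..n. tf a (?x a k) * tf a (?x a k)) = real n / 2"
          by (rule sq_sum[OF n nz tf_cases])
        have g2: "\<gamma> ^ 2 = 2 / (real d + 1)" unfolding \<gamma>_def by (simp add: add.commute)
        have "(\<Sum>k=1..n. prod_list (map (M_col d n m k) js)) = \<gamma> ^ 2 * (\<Sum>k=1..n. tf a (?x a k) * tf a (?x a k))"
          unfolding eq unfolding 3 True by (simp add: power2_eq_square)
        also have "\<dots> = 2 / (real d + 1) * (real n / 2)" unfolding hS g2 ..
        finally have "(\<Sum>k=1..n. prod_list (map (M_col d n m k) js)) / real n = 1 / (real d + 1)"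
          using n by (simp add: field_simps)
        then show ?thesis using True by (simp add: 3 V_def)
      next
        case False
        have "tf a = sin \<and> tf b = cos \<or> tf a = cos \<and> tf b = sin"
          using False \<open>a div 2 = b div 2\<close> unfolding tf_def
          by (metis dvd_mult_div_cancel odd_two_times_div_two_succ)
        then have "(\<Sum>k=1..n. tf a (?x a k) * tf b (?x a k)) = 0"
          by (rule sc_sum[OF n nz])
        then show ?thesis unfolding eq using False \<open>a div 2 = b div 2\<close> by (auto simp: 3 V_def)
      qed
    qed
  next
    case (4 a b c)
    have F3: "F3 m e n" using f3 4 by simp
    have abc: "a \<le> d" "b \<le> d" "c \<le> d" using js(1) 4 by auto
    have "(\<Sum>k=1..n. tf a (?x a k) * tf b (?x b k) * tf c (?x c k)) = 0"
      using sum3_zero[OF n tf_cases tf_cases tf_cases] F3 idx[OF abc(1)] idx[OF abc(2)] idx[OF abc(3)]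
      unfolding F3_def by auto
    then show ?thesis unfolding eq by (simp add: 4 V_def mult.assoc)
  qed
qed

lemma psf: "product_sigma_finite (\<lambda>_::nat. lborel)"
  unfolding product_sigma_finite_def by (simp add: lborel.sigma_finite_measure_axioms)

lemma space_leb: "space (leb d) = {..d} \<rightarrow>\<^sub>E UNIV"
  by (simp add: leb_def space_PiM)

lemma sets_leb: "sets (leb d) = sets (PiM {..d} (\<lambda>_. lborel))"
  by (simp add: leb_def)

lemma sph_norm_meas[measurable]: "sph_norm d \<in> borel_measurable (leb d)"
  unfolding sph_norm_def leb_def by measurable

lemma ball_sets[measurable]: "unit_ball d \<in> sets (leb d)"
  unfolding unit_ball_def by measurable

lemma emeasure_box:
  assumes "\<And>i. i \<le> d \<Longrightarrow> A i \<in> sets lborel"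
  shows "emeasure (leb d) (PiE {..d} A) = (\<Prod>i\<le>d. emeasure lborel (A i))"
  unfolding leb_def using assms by (subst product_sigma_finite.emeasure_PiM[OF psf]) auto

lemma comp_le_norm: "i \<le> d \<Longrightarrow> \<bar>x i\<bar> \<le> sph_norm d x"
  unfolding sph_norm_def
  by (rule real_le_rsqrt) (auto intro!: member_le_sum simp: power2_eq_square[symmetric])

lemma box_sets: "(\<And>i. i \<le> d \<Longrightarrow> A i \<in> sets lborel) \<Longrightarrow> PiE {..d} A \<in> sets (leb d)"
  unfolding leb_def by (rule sets_PiM_I_finite) auto

lemma ball_fin: "emeasure (leb d) (unit_ball d) < \<infinity>"
proof -
  have "unit_ball d \<subseteq> PiE {..d} (\<lambda>_. {-1..1})"
  proof
    fix x assume x: "x \<in> unit_ball d"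
    then have xs: "x \<in> {..d} \<rightarrow>\<^sub>E UNIV" and n1: "sph_norm d x \<le> 1"
      unfolding unit_ball_def space_leb by auto
    have "\<bar>x i\<bar> \<le> 1" if "i \<le> d" for i using comp_le_norm[OF that, of x] n1 by linarith
    then show "x \<in> PiE {..d} (\<lambda>_. {-1..1})" using xs unfolding PiE_iff by (auto simp: abs_le_iff)
  qed
  then have "emeasure (leb d) (unit_ball d) \<le> emeasure (leb d) (PiE {..d} (\<lambda>_. {-1..1}))"
    by (rule emeasure_mono) (rule box_sets, simp)
  also have "\<dots> = (\<Prod>i\<le>d. emeasure lborel {-1..(1::real)})"
    by (rule emeasure_box) simp
  also have "\<dots> < \<infinity>" by (simp add: ennreal_mult_less_top power_less_top_ennreal)
  finally show ?thesis .
qed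

lemma ball_pos: "emeasure (leb d) (unit_ball d) > 0"
proof -
  define r where "r = 1 / (real d + 1)"
  have r: "0 < r" "r \<le> 1" unfolding r_def by auto
  have "PiE {..d} (\<lambda>_. {0..r}) \<subseteq> unit_ball d"
  proof
    fix x assume x: "x \<in> PiE {..d} (\<lambda>_. {0..r})"
    have "(\<Sum>i\<le>d. (x i)^2) \<le> (\<Sum>i\<le>d. r)"
    proof (intro sum_mono)
      fix i assume "i \<in> {..d}"
      then have "0 \<le> x i" "x i \<le> r" using x by auto
      then have "(x i)^2 \<le> r^2" by (intro power_mono) auto
      also have "r^2 \<le> r" using r by (simp add: power2_eq_square mult_le_cancel_right1)
      finally show "(x i)^2 \<le> r" .
    qed
    also have "\<dots> = 1" unfolding r_def by simp
    finally have "sph_norm d x \<le> 1" unfolding sph_norm_def by simp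
    then show "x \<in> unit_ball d" using x unfolding unit_ball_def space_leb by auto
  qed
  then have le: "emeasure (leb d) (PiE {..d} (\<lambda>_. {0..r})) \<le> emeasure (leb d) (unit_ball d)"
    by (rule emeasure_mono) (rule ball_sets)
  have "0 < ennreal (r ^ Suc d)" using r by simp
  also have "\<dots> = (\<Prod>i\<le>d. emeasure lborel {0..r})"
    using r by (simp add: ennreal_power ennreal_mult)
  also have "\<dots> = emeasure (leb d) (PiE {..d} (\<lambda>_. {0..r}))"
    by (rule emeasure_box[symmetric]) auto
  also have "\<dots> \<le> emeasure (leb d) (unit_ball d)" by (rule le)
  finally show ?thesis .
qed

lemma ball_measure_pos: "measure (leb d) (unit_ball d) > 0"
  unfolding measure_def using ball_fin ball_pos
  by (subst enn2real_positive_iff) auto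

definition R :: "nat \<Rightarrow> (nat \<Rightarrow> real) \<Rightarrow> nat \<Rightarrow> real" where
  "R a x = (\<lambda>j. if j = a then - x j else x j)"

definition tr :: "nat \<Rightarrow> nat \<Rightarrow> nat \<Rightarrow> nat" where
  "tr a b j = (if j = a then b else if j = b then a else j)"

definition P :: "nat \<Rightarrow> nat \<Rightarrow> (nat \<Rightarrow> real) \<Rightarrow> nat \<Rightarrow> real" where
  "P a b x = (\<lambda>j. x (tr a b j))"

lemma tr_tr[simp]: "tr a b (tr a b j) = j" by (simp add: tr_def)

lemma tr_bij: "a \<le> d \<Longrightarrow> b \<le> d \<Longrightarrow> bij_betw (tr a b) {..d} {..d}"
  by (rule bij_betw_byWitness[where f' = "tr a b"]) (auto simp: tr_def)

lemma R_meas: assumes a: "a \<le> d" shows "R a \<in> measurable (leb d) (leb d)"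
  unfolding leb_def R_def
proof (rule measurable_PiM_single')
  fix j assume "j \<in> {..d}"
  then show "(\<lambda>\<omega>. if j = a then - \<omega> j else \<omega> j) \<in> measurable (Pi\<^sub>M {..d} (\<lambda>_. lborel)) lborel"
    by (cases "j = a") auto
next
  show "(\<lambda>\<omega> j. if j = a then - \<omega> j else \<omega> j) \<in> space (Pi\<^sub>M {..d} (\<lambda>_. lborel)) \<rightarrow> ({..d} \<rightarrow>\<^sub>E space lborel)"
    using a by (auto simp: space_PiM PiE_def extensional_def)
qed

lemma P_meas: assumes a: "a \<le> d" and b: "b \<le> d" shows "P a b \<in> measurable (leb d) (leb d)"
  unfolding leb_def P_def
proof (rule measurable_PiM_single')
  fix j assume "j \<in> {..d}"
  then show "(\<lambda>\<omega>. \<omega> (tr a b j)) \<in> measurable (Pi\<^sub>M {..d} (\<lambda>_. lborel)) lborel"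
    using a b by (auto simp: tr_def)
next
  show "(\<lambda>\<omega> j. \<omega> (tr a b j)) \<in> space (Pi\<^sub>M {..d} (\<lambda>_. lborel)) \<rightarrow> ({..d} \<rightarrow>\<^sub>E space lborel)"
    using a b by (auto simp: space_PiM PiE_def extensional_def tr_def)
qed

lemma uminus_sets: "A \<in> sets borel \<Longrightarrow> uminus -` A \<in> sets (borel :: real measure)"
  using measurable_sets[OF borel_measurable_uminus[OF measurable_ident_sets[OF refl]], of A] by simp

lemma lborel_uminus_emeasure:
  assumes "A \<in> sets lborel" shows "emeasure lborel (uminus -` A) = emeasure lborel (A :: real set)"
proof -
  have "emeasure (distr lborel borel uminus) A = emeasure lborel (A :: real set)"
    by (simp add: lborel_distr_uminus)
  then show ?thesis using assms by (subst (asm) emeasure_distr) auto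
qed

lemma R_distr:
  assumes a: "a \<le> d" shows "distr (leb d) (leb d) (R a) = leb d"
proof -
  have "distr (leb d) (leb d) (R a) = PiM {..d} (\<lambda>_. lborel)"
    unfolding leb_def
  proof (rule product_sigma_finite.PiM_eqI[OF psf])
    fix A :: "nat \<Rightarrow> real set" assume A: "\<And>i. i \<in> {..d} \<Longrightarrow> A i \<in> sets lborel"
    have pre: "R a -` PiE {..d} A \<inter> space (PiM {..d} (\<lambda>_. lborel)) =
        PiE {..d} (\<lambda>j. if j = a then uminus -` A j else A j)"
      using a by (auto simp: R_def space_PiM PiE_def Pi_def extensional_def split: if_splits)
    have "emeasure (distr (PiM {..d} (\<lambda>_. lborel)) (PiM {..d} (\<lambda>_. lborel)) (R a)) (PiE {..d} A)
        = emeasure (PiM {..d} (\<lambda>_. lborel)) (PiE {..d} (\<lambda>j. if j = a then uminus -` A j else A j))"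
      using R_meas[OF a] A unfolding leb_def pre[symmetric]
      by (intro emeasure_distr) (auto intro!: sets_PiM_I_finite uminus_sets)
    also have "\<dots> = (\<Prod>j\<le>d. emeasure lborel (if j = a then uminus -` A j else A j))"
      using A by (subst product_sigma_finite.emeasure_PiM[OF psf]) (auto intro: uminus_sets)
    also have "\<dots> = (\<Prod>j\<le>d. emeasure lborel (A j))"
      using A by (intro prod.cong refl) (auto simp: lborel_uminus_emeasure)
    finally show "emeasure (distr (PiM {..d} (\<lambda>_. lborel)) (PiM {..d} (\<lambda>_. lborel)) (R a)) (PiE {..d} A)
        = (\<Prod>j\<in>{..d}. emeasure lborel (A j))" .
  qed auto
  then show ?thesis by (simp add: leb_def)
qed

lemma P_distr:
  assumes a: "a \<le> d" and b: "b \<le> d" shows "distr (leb d) (leb d) (P a b) = leb d"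
proof -
  have "distr (leb d) (leb d) (P a b) = PiM {..d} (\<lambda>_. lborel)"
    unfolding leb_def
  proof (rule product_sigma_finite.PiM_eqI[OF psf])
    fix A :: "nat \<Rightarrow> real set" assume A: "\<And>i. i \<in> {..d} \<Longrightarrow> A i \<in> sets lborel"
    have trd: "tr a b j \<le> d \<longleftrightarrow> j \<le> d" for j using a b by (auto simp: tr_def)
    have pre: "P a b -` PiE {..d} A \<inter> space (PiM {..d} (\<lambda>_. lborel)) =
        PiE {..d} (\<lambda>j. A (tr a b j))"
    proof (intro set_eqI iffI)
      fix x assume "x \<in> P a b -` PiE {..d} A \<inter> space (PiM {..d} (\<lambda>_. lborel))"
      then have x: "\<And>j. j \<le> d \<Longrightarrow> x (tr a b j) \<in> A j" "x \<in> extensional {..d}"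
        by (auto simp: P_def space_PiM PiE_def Pi_def)
      have "x j \<in> A (tr a b j)" if "j \<le> d" for j
        using x(1)[of "tr a b j"] that trd by simp
      then show "x \<in> PiE {..d} (\<lambda>j. A (tr a b j))" using x(2) by (auto simp: PiE_def)
    next
      fix x assume x: "x \<in> PiE {..d} (\<lambda>j. A (tr a b j))"
      then have "x (tr a b j) \<in> A j" if "j \<le> d" for j
        using that trd[of j] PiE_mem[OF x, of "tr a b j"] by simp
      moreover have "x (tr a b j) = undefined" if "\<not> j \<le> d" for j
        using x that trd[of j] by (auto simp: PiE_def extensional_def)
      ultimately show "x \<in> P a b -` PiE {..d} A \<inter> space (PiM {..d} (\<lambda>_. lborel))"
        using x by (auto simp: P_def space_PiM PiE_def extensional_def)
    qed
    have "emeasure (distr (PiM {..d} (\<lambda>_. lborel)) (PiM {..d} (\<lambda>_. lborel)) (P a b)) (PiE {..d} A)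
        = emeasure (PiM {..d} (\<lambda>_. lborel)) (PiE {..d} (\<lambda>j. A (tr a b j)))"
      using P_meas[OF a b] A unfolding leb_def pre[symmetric]
      by (intro emeasure_distr) (auto intro!: sets_PiM_I_finite)
    also have "\<dots> = (\<Prod>j\<le>d. emeasure lborel (A (tr a b j)))"
      using A trd by (subst product_sigma_finite.emeasure_PiM[OF psf]) auto
    also have "\<dots> = (\<Prod>j\<le>d. emeasure lborel (A j))"
      by (rule prod.reindex_bij_betw[OF tr_bij[OF a b], of "\<lambda>j. emeasure lborel (A j)"])
    finally show "emeasure (distr (PiM {..d} (\<lambda>_. lborel)) (PiM {..d} (\<lambda>_. lborel)) (P a b)) (PiE {..d} A)
        = (\<Prod>j\<in>{..d}. emeasure lborel (A j))" .
  qed auto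
  then show ?thesis by (simp add: leb_def)
qed

lemma norm_R: "sph_norm d (R a x) = sph_norm d x"
  unfolding sph_norm_def R_def by (intro arg_cong[where f=sqrt] sum.cong) auto

lemma norm_P: "a \<le> d \<Longrightarrow> b \<le> d \<Longrightarrow> sph_norm d (P a b x) = sph_norm d x"
  unfolding sph_norm_def P_def
  using sum.reindex_bij_betw[OF tr_bij, of a d b "\<lambda>j. (x j)^2"] by simp

lemma inv_int:
  fixes F :: "(nat \<Rightarrow> real) \<Rightarrow> real"
  assumes T: "T \<in> measurable (leb d) (leb d)" and D: "distr (leb d) (leb d) T = leb d"
    and N: "\<And>x. sph_norm d (T x) = sph_norm d x"
    and F: "F \<in> borel_measurable (leb d)"
  shows "set_lebesgue_integral (leb d) (unit_ball d) F = set_lebesgue_integral (leb d) (unit_ball d) (\<lambda>x. F (T x))"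
proof -
  have ball: "T x \<in> unit_ball d \<longleftrightarrow> x \<in> unit_ball d" if "x \<in> space (leb d)" for x
    using measurable_space[OF T that] that N by (auto simp: unit_ball_def)
  have "set_lebesgue_integral (leb d) (unit_ball d) F = integral\<^sup>L (distr (leb d) (leb d) T) (\<lambda>x. indicator (unit_ball d) x *\<^sub>R F x)"
    unfolding set_lebesgue_integral_def D ..
  also have "\<dots> = integral\<^sup>L (leb d) (\<lambda>x. indicator (unit_ball d) (T x) *\<^sub>R F (T x))"
    by (rule Bochner_Integration.integral_distr[OF T]) (use F in measurable)
  also have "\<dots> = integral\<^sup>L (leb d) (\<lambda>x. indicator (unit_ball d) x *\<^sub>R F (T x))"
    by (intro Bochner_Integration.integral_cong refl) (simp add: ball indicator_def)
  finally show ?thesis unfolding set_lebesgue_integral_def .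
qed

definition G :: "nat \<Rightarrow> nat list \<Rightarrow> (nat \<Rightarrow> real) \<Rightarrow> real" where
  "G d js x = prod_list (map (\<lambda>i. x i / sph_norm d x) js)"

lemma comp_meas[measurable]: "i \<le> d \<Longrightarrow> (\<lambda>x. x i) \<in> borel_measurable (leb d)"
  unfolding leb_def using measurable_component_singleton[of i "{..d}" "\<lambda>_. lborel"] by simp

lemma G_meas: "set js \<subseteq> {..d} \<Longrightarrow> G d js \<in> borel_measurable (leb d)"
  unfolding G_def by (induction js) auto

lemma G_bound: "set js \<subseteq> {..d} \<Longrightarrow> \<bar>G d js x\<bar> \<le> 1"
proof (induction js)
  case Nil then show ?case by (simp add: G_def)
next
  case (Cons i js)
  have c: "\<bar>x i / sph_norm d x\<bar> \<le> 1"
  proof (cases "sph_norm d x = 0")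
    case False
    moreover have "sph_norm d x \<ge> 0" unfolding sph_norm_def by (simp add: sum_nonneg)
    ultimately have pos: "sph_norm d x > 0" by linarith
    have le: "\<bar>x i\<bar> \<le> sph_norm d x" using comp_le_norm[of i d x] Cons.prems by simp
    have "\<bar>x i / sph_norm d x\<bar> = \<bar>x i\<bar> / sph_norm d x" by (rule abs_div_pos[OF pos, symmetric])
    also have "\<dots> \<le> 1" using le pos by (simp add: divide_le_eq_1)
    finally show ?thesis .
  qed simp
  have ih: "\<bar>G d js x\<bar> \<le> 1" using Cons by simp
  have "\<bar>G d (i # js) x\<bar> = \<bar>x i / sph_norm d x\<bar> * \<bar>G d js x\<bar>"
    unfolding G_def by (simp only: list.map prod_list.Cons abs_mult)
  also have "\<dots> \<le> 1" by (rule mult_le_one[OF c abs_ge_zero ih])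
  finally show ?case .
qed

lemma G_int: "set js \<subseteq> {..d} \<Longrightarrow> integrable (leb d) (\<lambda>x. indicator (unit_ball d) x *\<^sub>R G d js x)"
  by (rule integrableI_bounded_set[where A = "unit_ball d" and B = 1])
     (use G_meas ball_fin G_bound in \<open>auto simp: indicator_def\<close>)

lemma prod_list_flip:
  fixes f :: "nat \<Rightarrow> real"
  shows "prod_list (map (\<lambda>i. if i = a then - f i else f i) js) = (-1) ^ count_list js a * prod_list (map f js)"
  by (induction js) (auto simp: algebra_simps)

lemma odd_zero:
  assumes a: "a \<le> d" and js: "set js \<subseteq> {..d}" and odd: "odd (count_list js a)"
  shows "set_lebesgue_integral (leb d) (unit_ball d) (G d js) = 0"
proof -
  have flip: "G d js (R a x) = - G d js x" for x
  proof -
    have "G d js (R a x) = prod_list (map (\<lambda>i. if i = a then - (x i / sph_norm d x) else x i / sph_norm d x) js)"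
      unfolding G_def norm_R unfolding R_def by (intro arg_cong[where f=prod_list] list.map_cong0) auto
    also have "\<dots> = - G d js x" using odd by (simp add: prod_list_flip G_def)
    finally show ?thesis .
  qed
  have "set_lebesgue_integral (leb d) (unit_ball d) (G d js) =
      set_lebesgue_integral (leb d) (unit_ball d) (\<lambda>x. G d js (R a x))"
    by (rule inv_int[OF R_meas[OF a] R_distr[OF a] norm_R G_meas[OF js]])
  also have "\<dots> = - set_lebesgue_integral (leb d) (unit_ball d) (G d js)"
    unfolding flip set_lebesgue_integral_def by simp
  finally show ?thesis by simp
qed

lemma null_origin: "AE x in leb d. sph_norm d x \<noteq> 0"
proof (rule AE_I')
  show "PiE {..d} (\<lambda>_. {0}) \<in> null_sets (leb d)"
  proof -
    have "emeasure (leb d) (PiE {..d} (\<lambda>_. {0::real})) = (\<Prod>i\<le>d. emeasure lborel {0::real})"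
      by (rule emeasure_box) auto
    also have "\<dots> = 0" by simp
    finally have "emeasure (leb d) (PiE {..d} (\<lambda>_. {0::real})) = 0" .
    then show ?thesis using box_sets[of d "\<lambda>_. {0}"] by (simp add: null_sets_def)
  qed
  show "{x \<in> space (leb d). \<not> sph_norm d x \<noteq> 0} \<subseteq> PiE {..d} (\<lambda>_. {0})"
  proof
    fix x assume x: "x \<in> {x \<in> space (leb d). \<not> sph_norm d x \<noteq> 0}"
    then have "(\<Sum>i\<le>d. (x i)^2) = 0" unfolding sph_norm_def by simp
    then have "\<forall>i\<in>{..d}. (x i)^2 = 0" by (subst (asm) sum_nonneg_eq_0_iff) auto
    moreover have "x \<in> extensional {..d}" using x unfolding space_leb by (auto simp: PiE_def)
    ultimately show "x \<in> PiE {..d} (\<lambda>_. {0})" by (intro PiE_I) (auto simp: extensional_def)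
  qed
qed

lemma sq_sum_one:
  assumes nz: "sph_norm d x \<noteq> 0"
  shows "(\<Sum>a\<le>d. G d [a, a] x) = 1"
proof -
  have h: "(\<Sum>a\<le>d. (x a)^2) = (sph_norm d x)^2" unfolding sph_norm_def
    by (simp add: sum_nonneg)
  have "(\<Sum>a\<le>d. G d [a, a] x) = (\<Sum>a\<le>d. (x a)^2) / (sph_norm d x)^2"
    unfolding G_def by (simp add: sum_divide_distrib power_divide power2_eq_square)
  also have "\<dots> = 1" using h nz by simp
  finally show ?thesis .
qed

lemma diag_int:
  assumes a: "a \<le> d"
  shows "set_lebesgue_integral (leb d) (unit_ball d) (G d [a, a]) = measure (leb d) (unit_ball d) / (real d + 1)"
proof -
  have eq0: "set_lebesgue_integral (leb d) (unit_ball d) (G d [b, b]) =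
      set_lebesgue_integral (leb d) (unit_ball d) (G d [0, 0])" if b: "b \<le> d" for b
  proof -
    have "set_lebesgue_integral (leb d) (unit_ball d) (G d [0, 0]) =
      set_lebesgue_integral (leb d) (unit_ball d) (\<lambda>x. G d [0, 0] (P b 0 x))"
      by (rule inv_int[OF P_meas[OF b] P_distr[OF b] norm_P[OF b] G_meas]) auto
    also have "(\<lambda>x. G d [0, 0] (P b 0 x)) = G d [b, b]"
    proof
      fix x show "G d [0, 0] (P b 0 x) = G d [b, b] x"
        unfolding G_def norm_P[OF b le0] by (simp add: P_def tr_def)
    qed
    finally show ?thesis by simp
  qed
  have "(\<Sum>b\<le>d. set_lebesgue_integral (leb d) (unit_ball d) (G d [b, b])) =
      integral\<^sup>L (leb d) (\<lambda>x. \<Sum>b\<le>d. indicator (unit_ball d) x *\<^sub>R G d [b, b] x)"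
    unfolding set_lebesgue_integral_def by (rule Bochner_Integration.integral_sum[symmetric]) (rule G_int, simp)
  also have "\<dots> = integral\<^sup>L (leb d) (indicator (unit_ball d))"
  proof (rule integral_cong_AE)
    show "AE x in leb d. (\<Sum>b\<le>d. indicator (unit_ball d) x *\<^sub>R G d [b, b] x) = indicator (unit_ball d) x"
      using null_origin by eventually_elim (simp add: sum_distrib_left[symmetric] sq_sum_one)
  next
    show "(\<lambda>x. \<Sum>b\<le>d. indicator (unit_ball d) x *\<^sub>R G d [b, b] x) \<in> borel_measurable (leb d)"
      by (intro borel_measurable_sum borel_measurable_scaleR borel_measurable_indicator ball_sets G_meas) auto
  next
    show "indicator (unit_ball d) \<in> borel_measurable (leb d)" by simp
  qed
  also have "\<dots> = measure (leb d) (unit_ball d)"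
    using ball_fin by (simp add: integral_indicator)
  finally have S: "(\<Sum>b\<le>d. set_lebesgue_integral (leb d) (unit_ball d) (G d [b, b])) = measure (leb d) (unit_ball d)" .
  have "(\<Sum>b\<le>d. set_lebesgue_integral (leb d) (unit_ball d) (G d [b, b])) =
      (\<Sum>b\<le>d. set_lebesgue_integral (leb d) (unit_ball d) (G d [0, 0]))"
    by (rule sum.cong[OF refl]) (rule eq0, simp)
  also have "\<dots> = (real d + 1) * set_lebesgue_integral (leb d) (unit_ball d) (G d [0, 0])"
    by (simp only: sum_constant card_atMost) simp
  finally have "(real d + 1) * set_lebesgue_integral (leb d) (unit_ball d) (G d [0, 0]) = measure (leb d) (unit_ball d)"
    using S by simp
  then show ?thesis using eq0[OF a] by (simp add: field_simps)
qed

lemma sphere_int: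
  assumes js: "set js \<subseteq> {..d}" "length js \<le> 3"
  shows "set_lebesgue_integral (leb d) (unit_ball d) (G d js) = V d js * measure (leb d) (unit_ball d)"
proof -
  consider "js = []" | a where "js = [a]" | a b where "js = [a, b]" | a b c where "js = [a, b, c]"
  proof -
    have "length js = 0 \<or> length js = Suc 0 \<or> length js = Suc (Suc 0) \<or> length js = Suc (Suc (Suc 0))"
      using js(2) by (auto simp: numeral_eq_Suc le_Suc_eq)
    then show "(js = [] \<Longrightarrow> thesis) \<Longrightarrow> (\<And>a. js = [a] \<Longrightarrow> thesis) \<Longrightarrow> (\<And>a b. js = [a, b] \<Longrightarrow> thesis)
       \<Longrightarrow> (\<And>a b c. js = [a, b, c] \<Longrightarrow> thesis) \<Longrightarrow> thesis"
      by (auto simp: length_Suc_conv)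
  qed
  then show ?thesis
  proof cases
    case 1
    have "set_lebesgue_integral (leb d) (unit_ball d) (G d js) = integral\<^sup>L (leb d) (indicator (unit_ball d))"
      unfolding set_lebesgue_integral_def 1 G_def by simp
    also have "\<dots> = measure (leb d) (unit_ball d)" using ball_fin by (simp add: integral_indicator)
    finally show ?thesis by (simp add: V_def 1)
  next
    case (2 a)
    then show ?thesis using odd_zero[of a d js] js by (simp add: V_def)
  next
    case (3 a b)
    show ?thesis
    proof (cases "a = b")
      case True
      then show ?thesis using diag_int[of a d] js 3 by (simp add: V_def)
    next
      case False
      then show ?thesis using odd_zero[of a d js] js 3 by (simp add: V_def)
    qed
  next
    case (4 a b c)
    have "\<exists>x\<in>set js. odd (count_list js x)"
      unfolding 4 by (cases "a = b"; cases "a = c"; cases "b = c") auto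
    then obtain x where "x \<in> set js" "odd (count_list js x)" by blast
    then show ?thesis using odd_zero[of x d js] js 4 by (auto simp: V_def)
  qed
qed

lemma mono_list:
  fixes y :: "nat \<Rightarrow> real"
  assumes "finite I"
  shows "\<exists>js. set js \<subseteq> I \<and> length js = (\<Sum>i\<in>I. \<alpha> i) \<and> (\<forall>y :: nat \<Rightarrow> real. (\<Prod>i\<in>I. y i ^ \<alpha> i) = prod_list (map y js))"
  using assms
proof (induction I rule: finite_induct)
  case empty then show ?case by (intro exI[of _ "[]"]) simp
next
  case (insert i I)
  then obtain js where js: "set js \<subseteq> I" "length js = (\<Sum>i\<in>I. \<alpha> i)"
    "\<forall>y :: nat \<Rightarrow> real. (\<Prod>i\<in>I. y i ^ \<alpha> i) = prod_list (map y js)" by blast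
  show ?case
  proof (intro exI[of _ "replicate (\<alpha> i) i @ js"] conjI allI)
    show "set (replicate (\<alpha> i) i @ js) \<subseteq> insert i I" using js by auto
    show "length (replicate (\<alpha> i) i @ js) = (\<Sum>i\<in>insert i I. \<alpha> i)" using js insert by simp
    fix y :: "nat \<Rightarrow> real"
    show "(\<Prod>i\<in>insert i I. y i ^ \<alpha> i) = prod_list (map y (replicate (\<alpha> i) i @ js))"
      using js insert by (simp add: prod_list_replicate)
  qed
qed

lemma sum_pairs: fixes f :: "nat \<Rightarrow> real" and e :: nat shows "(\<Sum>i<2 * e. f i) = (\<Sum>j<e. f (2 * j) + f (2 * j + 1))"
  by (induction e) (auto simp: sum.lessThan_Suc)

lemma col_sphere:
  assumes de: "d + 1 = 2 * e"
  shows "M_col d n m k \<in> unit_sphere d"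
proof -
  have dl: "{..d} = {..<2 * e}" using de by auto
  have "(\<Sum>i\<le>d. (M_col d n m k i)^2) = (2 / real (d + 1)) * (\<Sum>i<2 * e. (A_entry n m i k)^2)"
    unfolding dl sum_distrib_left by (intro sum.cong refl) (use de in \<open>auto simp: M_col_def power_mult_distrib\<close>)
  also have "(\<Sum>i<2 * e. (A_entry n m i k)^2) = (\<Sum>j<e. 1)"
    unfolding sum_pairs by (intro sum.cong refl) (simp add: A_entry_def)
  also have "(2 / real (d + 1)) * (\<Sum>j<e. (1::real)) = 1"
    using de by (simp add: field_simps)
  finally show ?thesis unfolding unit_sphere_def sph_norm_def by (auto simp: M_col_def)
qed

theorem mainTheorem7:
  fixes n d e s :: nat and m :: "nat \<Rightarrow> int"
  assumes "n > 0" and "odd d" and "e = (d + 1) div 2" and "s \<in> {1, 2, 3}"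
    and "inj_on m {1..e}"
    and "sidon_type (m ` {1..e}) s n"
  shows "spherical_design d s n (M_col d n m)"
proof -
  have n: "n > 0" by fact
  have de: "d + 1 = 2 * e" using assms(2,3) by auto
  have F: "F1 m e n \<and> (s \<ge> 2 \<longrightarrow> F2 m e n) \<and> (s \<ge> 3 \<longrightarrow> F3 m e n)"
  proof -
    have "s = 1 \<or> s = 2 \<or> s = 3" using assms(4) by auto
    then show ?thesis
    proof (elim disjE)
      assume "s = 1" then show ?thesis using facts1[of m e n] assms(6) by simp
    next
      assume "s = 2" then show ?thesis using facts2[of m e n] assms(5,6) by simp
    next
      assume "s = 3" then show ?thesis using facts3[of m e n] assms(5,6) by simp
    qed
  qed
  have s3: "s \<le> 3" using assms(4) by auto
  have pts: "(\<Sum>k=1..n. prod_list (map (M_col d n m k) js)) / real n = V d js"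
    if "set js \<subseteq> {..d}" "length js \<le> s" for js
    using points[OF n de, of js] that F s3 by auto
  have sph: "set_lebesgue_integral (leb d) (unit_ball d) (G d js) = V d js * measure (leb d) (unit_ball d)"
    if "set js \<subseteq> {..d}" "length js \<le> s" for js
    using sphere_int[of js d] that s3 by auto
  have mu: "measure (leb d) (unit_ball d) > 0" by (rule ball_measure_pos)
  show ?thesis unfolding spherical_design_def
  proof (intro conjI ballI allI impI)
    fix k show "M_col d n m k \<in> unit_sphere d" by (rule col_sphere[OF de])
  next
    fix f assume "poly_deg_le d s f"
    define Al where "Al = {\<alpha> \<in> {..d} \<rightarrow>\<^sub>E {..s}. (\<Sum>i\<le>d. \<alpha> i) \<le> s}"
    obtain c where f: "\<And>x. f x = (\<Sum>\<alpha>\<in>Al. c \<alpha> * (\<Prod>i\<le>d. x i ^ \<alpha> i))"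
      using \<open>poly_deg_le d s f\<close> unfolding poly_deg_le_def Al_def by blast
    have "Al \<subseteq> {..d} \<rightarrow>\<^sub>E {..s}" unfolding Al_def by auto
    then have finAl: "finite Al" by (rule finite_subset) (simp add: finite_PiE)
    have "\<forall>\<alpha>\<in>Al. \<exists>js. set js \<subseteq> {..d} \<and> length js = (\<Sum>i\<le>d. \<alpha> i) \<and>
        (\<forall>y :: nat \<Rightarrow> real. (\<Prod>i\<le>d. y i ^ \<alpha> i) = prod_list (map y js))"
      using mono_list[of "{..d}"] by blast
    then obtain J where J: "\<And>\<alpha>. \<alpha> \<in> Al \<Longrightarrow> set (J \<alpha>) \<subseteq> {..d} \<and> length (J \<alpha>) = (\<Sum>i\<le>d. \<alpha> i) \<and>
        (\<forall>y :: nat \<Rightarrow> real. (\<Prod>i\<le>d. y i ^ \<alpha> i) = prod_list (map y (J \<alpha>)))"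
      by metis
    have Jl: "length (J \<alpha>) \<le> s" if "\<alpha> \<in> Al" for \<alpha> using J[OF that] that unfolding Al_def by simp
    have GI: "integrable (leb d) (\<lambda>x. indicator (unit_ball d) x * G d (J \<alpha>) x)" if "\<alpha> \<in> Al" for \<alpha>
      using G_int[of "J \<alpha>" d] J[OF that] by simp
    have fJ: "f y = (\<Sum>\<alpha>\<in>Al. c \<alpha> * prod_list (map y (J \<alpha>)))" for y
      unfolding f by (intro sum.cong refl) (simp add: J)
    have "set_lebesgue_integral (leb d) (unit_ball d) (\<lambda>x. f (\<lambda>i. x i / sph_norm d x))
        = integral\<^sup>L (leb d) (\<lambda>x. \<Sum>\<alpha>\<in>Al. c \<alpha> * (indicator (unit_ball d) x *\<^sub>R G d (J \<alpha>) x))"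
      unfolding set_lebesgue_integral_def fJ G_def
      by (intro Bochner_Integration.integral_cong refl) (simp add: sum_distrib_left algebra_simps)
    also have "\<dots> = (\<Sum>\<alpha>\<in>Al. c \<alpha> * integral\<^sup>L (leb d) (\<lambda>x. indicator (unit_ball d) x *\<^sub>R G d (J \<alpha>) x))"
      by (subst Bochner_Integration.integral_sum)
         (use GI in auto)
    also have "\<dots> = (\<Sum>\<alpha>\<in>Al. c \<alpha> * (V d (J \<alpha>) * measure (leb d) (unit_ball d)))"
      using sph J Jl unfolding set_lebesgue_integral_def by (intro sum.cong refl) auto
    finally have L: "sphere_avg d f = (\<Sum>\<alpha>\<in>Al. c \<alpha> * V d (J \<alpha>))"
      unfolding sphere_avg_def using mu by (simp add: sum_divide_distrib)
    have "(\<Sum>k=1..n. f (M_col d n m k)) / real n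
        = (\<Sum>\<alpha>\<in>Al. c \<alpha> * ((\<Sum>k=1..n. prod_list (map (M_col d n m k) (J \<alpha>))) / real n))"
      unfolding fJ by (simp add: sum_distrib_left sum_divide_distrib) (rule sum.swap)
    also have "\<dots> = (\<Sum>\<alpha>\<in>Al. c \<alpha> * V d (J \<alpha>))"
      using pts J Jl by (intro sum.cong refl) auto
    finally show "sphere_avg d f = (\<Sum>k=1..n. f (M_col d n m k)) / real n" using L by simp
  qed
qed

end
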